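(* Let $d>1$ be an integer. With $\mathcal{L}_d$ the vector bundle on $\mathbb{P}^5=\mathbb{P}(\wedge^2S_1)$ defined as the kernel of $\bar\tau_d\otimes 1: H^0(\mathbb{P}^3,T\mathbb{P}^3(d-1))\otimes\mathcal{O}_{\mathbb{P}^5}\to S_{d+1}\otimes\mathcal{O}_{\mathbb{P}^5}(1)$, $\varphi\otimes\omega\mapsto\omega\cdot\varphi$, let $\mathbb{P}(\mathcal{L}_d)\subset\mathbb{P}^5\times\mathbb{F}_d$ be the associated projective subbundle and $\mathbb{L}_d\subset\mathbb{F}_d$ its image under the second projection $\mathbf{p}$ (the variety of Legendrian foliations of degree $d$). Then $\mathbf{p}:\mathbb{P}(\mathcal{L}_d)\to\mathbb{L}_d$ is generically bijective; i.e. a general $\varphi\in\mathbb{L}_d$ is tangent to one and only one distribution $\omega\in\mathbb{P}^5\setminus\mathbb{G}$.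
   Context: Work over $\mathbb{C}$. Let $x_1,\dots,x_4$ be homogeneous coordinates on $\mathbb{P}^3$, $S_k$ the space of homogeneous polynomials of degree $k$ in $x_1,\dots,x_4$, $\partial_R=\sum x_i\partial_{x_i}$. The space of foliations of dimension one and degree $d$ is $\mathbb{F}_d:=\mathbb{P}(H^0(\mathbb{P}^3,T\mathbb{P}^3(d-1)))$ with $H^0(\mathbb{P}^3,T\mathbb{P}^3(d-1))=(S_d\otimes\langle\partial_{x_1},\dots,\partial_{x_4}\rangle)/(S_{d-1}\cdot\partial_R)$, elements represented by $\varphi=\sum p_i\partial_{x_i}$, $p_i\in S_d$. Points of $\mathbb{P}^5=\mathbb{P}(\wedge^2S_1)$ are degree-$0$ distributions $\omega=\sum_{i<j}\alpha_{ij}(x_jdx_i-x_idx_j)$ (antisymmetric $4\times 4$ matrices up to scalar); with $\omega=\sum a_idx_i$, set $\omega\cdot\varphi:=\sum a_ip_i\in S_{d+1}$, and $\varphi$ is tangent to $\omega$ if $\omega\cdot\varphi=0$. $\mathbb{G}\subset\mathbb{P}^5$ is the Pfaff–Plücker quadric of rank-$2$ matrices; its complement consists of contact forms (rank $4$). The kernel sheaf $\mathcal{L}_d$ is locally free on $\mathbb{P}^5$; over $\mathbb{P}^5\setminus\mathbb{G}$ its fiber at $\omega$ is $\{\varphi\mid\omega\cdot\varphi=0\}$. *)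

theory Defs
  imports Complex_Main "HOL-Library.Poly_Mapping"
begin

text \<open>Polynomials in the variables x_0,...,x_3 (indices 0..3 stand for x_1..x_4) with
complex coefficients: finitely supported maps from monomials (exponent vectors) to coefficients.\<close>

type_synonym mpoly = "(nat \<Rightarrow>\<^sub>0 nat) \<Rightarrow>\<^sub>0 complex"

definition var :: "nat \<Rightarrow> mpoly" where
  "var i = Poly_Mapping.single (Poly_Mapping.single i 1) 1"

definition const :: "complex \<Rightarrow> mpoly" where
  "const c = Poly_Mapping.single 0 c"

text \<open>p lies in S_k: homogeneous of degree k in x_0..x_3 (0 is in every S_k).\<close>
definition hom :: "nat \<Rightarrow> mpoly \<Rightarrow> bool" where
  "hom k p \<longleftrightarrow> (\<forall>m \<in> Poly_Mapping.keys p. Poly_Mapping.keys (m::nat \<Rightarrow>\<^sub>0 nat) \<subseteq> {..<4} \<and> (\<Sum>i<4. Poly_Mapping.lookup m i) = k)"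

text \<open>Representatives phi = sum p_i d/dx_i with p_i in S_d: the space S_d \<otimes> <d/dx_i>.\<close>
definition VF :: "nat \<Rightarrow> (nat \<Rightarrow> mpoly) set" where
  "VF d = {\<phi>. (\<forall>i<4. hom d (\<phi> i)) \<and> (\<forall>i\<ge>4. \<phi> i = 0)}"

definition Rad :: "nat \<Rightarrow> (nat \<Rightarrow> mpoly) set" where
  "Rad d = {\<phi>. \<exists>g. hom (d - 1) g \<and> (\<forall>i<4. \<phi> i = g * var i) \<and> (\<forall>i\<ge>4. \<phi> i = 0)}"

text \<open>Degree-0 distributions: antisymmetric 4x4 matrices alpha (indices 0..3).\<close>
definition antisym4 :: "(nat \<Rightarrow> nat \<Rightarrow> complex) \<Rightarrow> bool" where
  "antisym4 A \<longleftrightarrow> (\<forall>i j. A i j = - A j i) \<and> (\<forall>i j. 4 \<le> i \<or> 4 \<le> j \<longrightarrow> A i j = 0)"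

text \<open>Pfaffian; the Pfaff-Pluecker quadric G is its zero locus (rank-2 matrices).\<close>
definition pfaff :: "(nat \<Rightarrow> nat \<Rightarrow> complex) \<Rightarrow> complex" where
  "pfaff A = A 0 1 * A 2 3 - A 0 2 * A 1 3 + A 0 3 * A 1 2"

definition contact :: "(nat \<Rightarrow> nat \<Rightarrow> complex) \<Rightarrow> bool" where
  "contact A \<longleftrightarrow> antisym4 A \<and> pfaff A \<noteq> 0"

text \<open>omega = sum_{i<j} A i j (x_j dx_i - x_i dx_j) = sum_i a_i dx_i with
  a_i = sum_j A i j x_j.\<close>
definition form_coeff :: "(nat \<Rightarrow> nat \<Rightarrow> complex) \<Rightarrow> nat \<Rightarrow> mpoly" where
  "form_coeff A i = (\<Sum>j<4. const (A i j) * var j)"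

definition tangent :: "(nat \<Rightarrow> nat \<Rightarrow> complex) \<Rightarrow> (nat \<Rightarrow> mpoly) \<Rightarrow> bool" where
  "tangent A \<phi> \<longleftrightarrow> (\<Sum>i<4. form_coeff A i * \<phi> i) = 0"

inductive_set polyfun :: "((nat \<Rightarrow> mpoly) \<Rightarrow> complex) set" where
  pf_const: "(\<lambda>\<phi>. c) \<in> polyfun"
| pf_coord: "(\<lambda>\<phi>. Poly_Mapping.lookup (\<phi> i) m) \<in> polyfun"
| pf_add: "f \<in> polyfun \<Longrightarrow> g \<in> polyfun \<Longrightarrow> (\<lambda>\<phi>. f \<phi> + g \<phi>) \<in> polyfun"
| pf_mult: "f \<in> polyfun \<Longrightarrow> g \<in> polyfun \<Longrightarrow> (\<lambda>\<phi>. f \<phi> * g \<phi>) \<in> polyfun"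

definition zclosure :: "nat \<Rightarrow> (nat \<Rightarrow> mpoly) set \<Rightarrow> (nat \<Rightarrow> mpoly) set" where
  "zclosure d A = {\<phi> \<in> VF d. \<forall>f \<in> polyfun. (\<forall>\<psi> \<in> A. f \<psi> = 0) \<longrightarrow> f \<phi> = 0}"

text \<open>Representatives of foliations (nonzero in H^0(TP^3(d-1))) tangent to some contact form.\<close>
definition tangent_to_contact :: "nat \<Rightarrow> (nat \<Rightarrow> mpoly) set" where
  "tangent_to_contact d = {\<phi> \<in> VF d. \<phi> \<notin> Rad d \<and> (\<exists>A. contact A \<and> tangent A \<phi>)}"

text \<open>Representatives of points of L_d = p(P(L_d)) = closure of the foliations tangent to a
contact form.\<close>
definition Legendrian :: "nat \<Rightarrow> (nat \<Rightarrow> mpoly) set" where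
  "Legendrian d = {\<phi> \<in> zclosure d (tangent_to_contact d). \<phi> \<notin> Rad d}"

end

theory Submission
  imports Defs "Jordan_Normal_Form.Determinant"
begin


lemma lookup_single_mult:
  fixes p :: mpoly
  shows "Poly_Mapping.lookup (Poly_Mapping.single a c * p) (a + m) = c * Poly_Mapping.lookup p m"
  by (simp add: lookup_mult lookup_single when_mult mult_when Sum_any_right_distrib)

lemma lookup_single_mult0:
  fixes p :: mpoly
  assumes "\<forall>m. k \<noteq> a + m"
  shows "Poly_Mapping.lookup (Poly_Mapping.single a c * p) k = 0"
  using assms by (simp add: lookup_mult lookup_single when_mult mult_when Sum_any_right_distrib)

lemma lookup_var_mult: "Poly_Mapping.lookup (var j * p) (Poly_Mapping.single j 1 + m) = Poly_Mapping.lookup p m"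
  unfolding var_def by (simp add: lookup_single_mult)

lemma lookup_var_mult0: "\<forall>m. k \<noteq> Poly_Mapping.single j 1 + m \<Longrightarrow> Poly_Mapping.lookup (var j * p) k = 0"
  unfolding var_def by (simp add: lookup_single_mult0)

lemma lookup_const_mult: "Poly_Mapping.lookup (const c * p) m = c * Poly_Mapping.lookup p m"
  unfolding const_def using lookup_single_mult[of 0 c p m] by simp

lemma const_0[simp]: "const 0 = 0" unfolding const_def by simp
lemma const_1[simp]: "const 1 = 1" unfolding const_def by simp
lemma const_uminus: "const (- c) = - const c" unfolding const_def by (simp add: single_uminus)

lemma polyfun_cmult: "f \<in> polyfun \<Longrightarrow> (\<lambda>\<phi>. c * f \<phi>) \<in> polyfun"
  using pf_mult[OF pf_const] by blast
lemma polyfun_diff: "f \<in> polyfun \<Longrightarrow> g \<in> polyfun \<Longrightarrow> (\<lambda>\<phi>. f \<phi> - g \<phi>) \<in> polyfun"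
  using pf_add[OF _ polyfun_cmult[of g "-1"]] by simp

lemma polyfun_sum: "finite S \<Longrightarrow> (\<And>x. x \<in> S \<Longrightarrow> h x \<in> polyfun) \<Longrightarrow> (\<lambda>\<phi>. \<Sum>x\<in>S. h x \<phi>) \<in> polyfun"
proof (induction S rule: finite_induct)
  case empty then show ?case using pf_const[of 0] by simp
next
  case (insert x F) then show ?case using pf_add[of "h x" "\<lambda>\<phi>. \<Sum>x\<in>F. h x \<phi>"] by simp
qed

lemma polyfun_prod: "finite S \<Longrightarrow> (\<And>x. x \<in> S \<Longrightarrow> h x \<in> polyfun) \<Longrightarrow> (\<lambda>\<phi>. \<Prod>x\<in>S. h x \<phi>) \<in> polyfun"
proof (induction S rule: finite_induct)
  case empty then show ?case using pf_const[of 1] by simp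
next
  case (insert x F) then show ?case using pf_mult[of "h x" "\<lambda>\<phi>. \<Prod>x\<in>F. h x \<phi>"] by simp
qed

lemma polyfun_var_mult: "(\<lambda>\<phi>. Poly_Mapping.lookup (var j * \<phi> i) m) \<in> polyfun"
proof (cases "\<exists>m'. m = Poly_Mapping.single j 1 + m'")
  case True
  then obtain m' where m: "m = Poly_Mapping.single j 1 + m'" by blast
  show ?thesis unfolding m lookup_var_mult by (rule pf_coord)
next
  case False
  then show ?thesis using lookup_var_mult0[of m j] pf_const[of 0] by simp
qed

definition xmon :: "nat \<Rightarrow> nat \<Rightarrow> nat \<Rightarrow> nat \<Rightarrow> (nat \<Rightarrow>\<^sub>0 nat)" where
  "xmon a b c e = Poly_Mapping.single 0 a + Poly_Mapping.single 1 b + Poly_Mapping.single 2 c + Poly_Mapping.single 3 e"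

lemma lookup_xmon: "Poly_Mapping.lookup (xmon a b c e) i =
  (if i = 0 then a else if i = 1 then b else if i = 2 then c else if i = 3 then e else 0)"
  unfolding xmon_def by (simp add: lookup_add lookup_single when_def)

lemma xmon_eq[simp]: "xmon a b c e = xmon a' b' c' e' \<longleftrightarrow> a = a' \<and> b = b' \<and> c = c' \<and> e = e'"
proof
  assume h: "xmon a b c e = xmon a' b' c' e'"
  show "a = a' \<and> b = b' \<and> c = c' \<and> e = e'"
    using arg_cong[OF h, of "\<lambda>m. Poly_Mapping.lookup m 0"] arg_cong[OF h, of "\<lambda>m. Poly_Mapping.lookup m 1"]
      arg_cong[OF h, of "\<lambda>m. Poly_Mapping.lookup m 2"] arg_cong[OF h, of "\<lambda>m. Poly_Mapping.lookup m 3"]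
    by (simp add: lookup_xmon)
qed simp

lemma xmon_add[simp]: "xmon a b c e + xmon a' b' c' e' = xmon (a+a') (b+b') (c+c') (e+e')"
  unfolding xmon_def by (simp add: single_add algebra_simps)

lemma var_xmon: "var 0 = Poly_Mapping.single (xmon 1 0 0 0) 1" "var 1 = Poly_Mapping.single (xmon 0 1 0 0) 1"
  "var 2 = Poly_Mapping.single (xmon 0 0 1 0) 1" "var 3 = Poly_Mapping.single (xmon 0 0 0 1) 1"
  unfolding var_def xmon_def by simp_all

lemma single_j_xmon: "Poly_Mapping.single (3::nat) (1::nat) = xmon 0 0 0 1" unfolding xmon_def by simp

lemma sum4: "(\<Sum>i<4. (g::nat\<Rightarrow>'a::comm_monoid_add) i) = g 0 + g 1 + g 2 + g 3"
  by (simp add: eval_nat_numeral lessThan_Suc add.commute add.left_commute)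

lemma keys_xmon: "Poly_Mapping.keys (xmon a b c e) \<subseteq> {..<4}"
proof
  fix i assume "i \<in> Poly_Mapping.keys (xmon a b c e)"
  then have "Poly_Mapping.lookup (xmon a b c e) i \<noteq> 0" using in_keys_iff by metis
  then show "i \<in> {..<4}" unfolding lookup_xmon by (simp split: if_splits)
qed

lemma hom_single_xmon: "a + b + c + e = k \<Longrightarrow> Defs.hom k (Poly_Mapping.single (xmon a b c e) x)"
  unfolding Defs.hom_def
proof (cases "x = 0")
  case False
  assume "a + b + c + e = k"
  then show "\<forall>m\<in>Poly_Mapping.keys (Poly_Mapping.single (xmon a b c e) x). Poly_Mapping.keys m \<subseteq> {..<4} \<and> (\<Sum>i<4. Poly_Mapping.lookup m i) = k"
    using False keys_xmon by (simp add: sum4 lookup_xmon)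
qed simp

lemma hom_add: "Defs.hom k p \<Longrightarrow> Defs.hom k q \<Longrightarrow> Defs.hom k (p + q)"
proof -
  assume a: "Defs.hom k p" "Defs.hom k q"
  show ?thesis unfolding Defs.hom_def
  proof
    fix m assume "m \<in> Poly_Mapping.keys (p + q)"
    then have "m \<in> Poly_Mapping.keys p \<or> m \<in> Poly_Mapping.keys q" using keys_add[of p q] by blast
    then show "Poly_Mapping.keys m \<subseteq> {..<4} \<and> (\<Sum>i<4. Poly_Mapping.lookup m i) = k"
      using a unfolding Defs.hom_def by blast
  qed
qed
lemma hom_0: "Defs.hom k 0" unfolding Defs.hom_def by simp



definition pI :: "nat \<Rightarrow> nat" where "pI k = (if k < 3 then 0 else if k < 5 then 1 else 2)"
definition pJ :: "nat \<Rightarrow> nat" where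
  "pJ k = (if k = 0 then 1 else if k = 1 then 2 else if k = 2 then 3 else if k = 3 then 2 else 3)"

definition amat :: "(nat \<Rightarrow> complex) \<Rightarrow> nat \<Rightarrow> nat \<Rightarrow> complex" where
  "amat x i j = (if i < 4 \<and> j < 4 then (if i < j then x (i + j - 1 + (if i = 0 then 0 else 1))
     else if j < i then - x (j + i - 1 + (if j = 0 then 0 else 1)) else 0) else 0)"

definition rowP :: "(nat \<Rightarrow> mpoly) \<Rightarrow> nat \<Rightarrow> mpoly" where
  "rowP \<phi> k = var (pJ k) * \<phi> (pI k) - var (pI k) * \<phi> (pJ k)"

definition rowv :: "(nat \<Rightarrow> mpoly) \<Rightarrow> (nat \<Rightarrow>\<^sub>0 nat) \<Rightarrow> nat \<Rightarrow> complex" where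
  "rowv \<phi> m k = Poly_Mapping.lookup (rowP \<phi> k) m"

lemma sum6: "(\<Sum>i<6. (g::nat\<Rightarrow>'a::comm_monoid_add) i) = g 0 + g 1 + g 2 + g 3 + g 4 + g 5"
  by (simp add: eval_nat_numeral lessThan_Suc add.commute add.left_commute)

lemma antisym_diag: "antisym4 A \<Longrightarrow> A i i = 0"
proof -
  assume "antisym4 A"
  then have "A i i = - A i i" unfolding antisym4_def by blast
  then show ?thesis by simp
qed

lemma antisym_sw: "antisym4 A \<Longrightarrow> A j i = - A i j"
  unfolding antisym4_def by blast

lemma form_identity:
  assumes "antisym4 A"
  shows "(\<Sum>i<4. form_coeff A i * \<phi> i) = (\<Sum>k<6. const (A (pI k) (pJ k)) * rowP \<phi> k)"
proof -
  note d = antisym_diag[OF assms] and s = antisym_sw[OF assms]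
  have e: "A 1 0 = - A 0 1" "A 2 0 = - A 0 2" "A 3 0 = - A 0 3" "A 2 1 = - A 1 2" "A 3 1 = - A 1 3" "A 3 2 = - A 2 3"
    by (rule s)+
  show ?thesis
    unfolding form_coeff_def rowP_def sum4 sum6
    apply (simp add: d e e[unfolded One_nat_def] const_uminus pI_def pJ_def)
    apply (simp add: algebra_simps)
    done
qed

lemma amat_antisym: "antisym4 (amat x)"
  unfolding antisym4_def
proof (intro conjI allI impI)
  fix i j show "amat x i j = - amat x j i" unfolding amat_def by simp
next
  fix i j :: nat assume "4 \<le> i \<or> 4 \<le> j" then show "amat x i j = 0" unfolding amat_def by auto
qed

lemma amat_pair: "k < 6 \<Longrightarrow> amat x (pI k) (pJ k) = x k"
  unfolding amat_def pI_def pJ_def by (auto simp: eval_nat_numeral less_Suc_eq)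

lemma amat_vec: "antisym4 B \<Longrightarrow> amat (\<lambda>k. B (pI k) (pJ k)) = B"
proof (intro ext)
  fix i j assume B: "antisym4 B"
  note d = antisym_diag[OF B] and s = antisym_sw[OF B]
  have z: "4 \<le> i \<or> 4 \<le> j \<Longrightarrow> B i j = 0" using B unfolding antisym4_def by blast
  show "amat (\<lambda>k. B (pI k) (pJ k)) i j = B i j"
  proof (cases "i < 4 \<and> j < 4")
    case True
    then have "i \<in> {0,1,2,3}" "j \<in> {0,1,2,3}" by auto
    then show ?thesis unfolding amat_def pI_def pJ_def using d[of i] s[of i j] by (elim insertE; simp)
  next
    case False then show ?thesis using z unfolding amat_def by auto
  qed
qed

lemma pfaff_amat: "pfaff (amat x) = x 0 * x 5 - x 1 * x 4 + x 2 * x 3"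
  unfolding pfaff_def amat_def by (simp add: numeral_eq_Suc)

lemma tangent_iff:
  assumes "antisym4 A"
  shows "tangent A \<phi> \<longleftrightarrow> (\<forall>m. (\<Sum>k<6. A (pI k) (pJ k) * rowv \<phi> m k) = 0)"
proof -
  have "Poly_Mapping.lookup (\<Sum>i<4. form_coeff A i * \<phi> i) m = (\<Sum>k<6. A (pI k) (pJ k) * rowv \<phi> m k)" for m
    unfolding form_identity[OF assms] lookup_sum rowv_def lookup_const_mult by simp
  moreover have "(P = 0) \<longleftrightarrow> (\<forall>m. Poly_Mapping.lookup P m = 0)" for P :: mpoly
    by (metis lookup_zero poly_mapping_eqI)
  ultimately show ?thesis unfolding tangent_def by simp
qed

lemma polyfun_rowv: "(\<lambda>\<phi>. rowv \<phi> m k) \<in> polyfun"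
  unfolding rowv_def rowP_def lookup_minus by (intro polyfun_diff polyfun_var_mult)



definition mm :: "nat \<Rightarrow> nat \<Rightarrow> (nat \<Rightarrow>\<^sub>0 nat)" where
  "mm d r = (if r = 0 then xmon d 0 1 0 else if r = 1 then xmon d 0 0 1 else if r = 2 then xmon (d-1) 1 1 0
     else if r = 3 then xmon (d-1) 1 0 1 else xmon 0 d 0 1)"

definition Nm :: "nat \<Rightarrow> (nat \<Rightarrow> mpoly) \<Rightarrow> (nat \<Rightarrow> complex) \<Rightarrow> complex mat" where
  "Nm d \<phi> v = mat 6 6 (\<lambda>(r,k). if r < 5 then rowv \<phi> (mm d r) k else v k)"

definition ev :: "nat \<Rightarrow> nat \<Rightarrow> complex" where "ev c = (\<lambda>k. if k = c then 1 else 0)"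

definition Kc :: "nat \<Rightarrow> (nat \<Rightarrow> mpoly) \<Rightarrow> nat \<Rightarrow> complex" where
  "Kc d \<phi> c = det (Nm d \<phi> (ev c))"

definition fpf :: "nat \<Rightarrow> (nat \<Rightarrow> mpoly) \<Rightarrow> complex" where
  "fpf d \<phi> = Kc d \<phi> 0 * Kc d \<phi> 5 - Kc d \<phi> 1 * Kc d \<phi> 4 + Kc d \<phi> 2 * Kc d \<phi> 3"

lemma Nm_carrier: "Nm d \<phi> v \<in> carrier_mat 6 6" unfolding Nm_def by simp

lemma det_polyfun:
  assumes "\<And>i j. i < n \<Longrightarrow> j < n \<Longrightarrow> (\<lambda>\<phi>. g \<phi> (i,j)) \<in> polyfun"
  shows "(\<lambda>\<phi>. det (mat n n (g \<phi>))) \<in> polyfun"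
proof -
  have e: "det (mat n n (g \<phi>)) = (\<Sum>p \<in> {p. p permutes {0..<n}}. signof p * (\<Prod>i = 0..<n. g \<phi> (i, p i)))" for \<phi>
  proof -
    have "det (mat n n (g \<phi>)) = (\<Sum>p \<in> {p. p permutes {0..<n}}. signof p * (\<Prod>i = 0..<n. mat n n (g \<phi>) $$ (i, p i)))"
      by (rule det_def') simp
    also have "\<dots> = (\<Sum>p \<in> {p. p permutes {0..<n}}. signof p * (\<Prod>i = 0..<n. g \<phi> (i, p i)))"
      by (intro sum.cong refl arg_cong2[where f="(*)"] prod.cong) (auto simp: permutes_in_image)
    finally show ?thesis .
  qed
  show ?thesis unfolding e
  proof (rule polyfun_sum)
    show "finite {p. p permutes {0..<n}}" by (simp add: finite_permutations)
  next
    fix p assume p: "p \<in> {p. p permutes {0..<n}}"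
    show "(\<lambda>\<phi>. signof p * (\<Prod>i = 0..<n. g \<phi> (i, p i))) \<in> polyfun"
    proof (rule polyfun_cmult, rule polyfun_prod)
      fix i assume "i \<in> {0..<n}"
      then show "(\<lambda>\<phi>. g \<phi> (i, p i)) \<in> polyfun" using p assms by (auto simp: permutes_in_image)
    qed simp
  qed
qed

lemma Nm_polyfun:
  assumes "\<And>k. (\<lambda>\<phi>. v \<phi> k) \<in> polyfun"
  shows "(\<lambda>\<phi>. det (Nm d \<phi> (v \<phi>))) \<in> polyfun"
  unfolding Nm_def
proof (rule det_polyfun)
  fix i j :: nat
  show "(\<lambda>\<phi>. (case (i, j) of (r, k) \<Rightarrow> if r < 5 then rowv \<phi> (mm d r) k else v \<phi> k)) \<in> polyfun"
    using assms polyfun_rowv by (cases "i < 5") auto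
qed

lemma Kc_polyfun: "(\<lambda>\<phi>. Kc d \<phi> c) \<in> polyfun"
  unfolding Kc_def using Nm_polyfun[of "\<lambda>\<phi>. ev c" d] pf_const by blast

lemma fpf_polyfun: "fpf d \<in> polyfun"
proof -
  have "(\<lambda>\<phi>. Kc d \<phi> 0 * Kc d \<phi> 5 - Kc d \<phi> 1 * Kc d \<phi> 4 + Kc d \<phi> 2 * Kc d \<phi> 3) \<in> polyfun"
    by (intro pf_add polyfun_diff pf_mult Kc_polyfun)
  then show ?thesis unfolding fpf_def[abs_def] .
qed

lemma cof_indep: "cofactor (Nm d \<phi> v) 5 j = cofactor (Nm d \<phi> w) 5 j"
proof -
  have "mat_delete (Nm d \<phi> v) 5 j = mat_delete (Nm d \<phi> w) 5 j"
    unfolding mat_delete_def by (rule eq_matI) (auto simp: Nm_def)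
  then show ?thesis unfolding cofactor_def by simp
qed

lemma det_lin: "det (Nm d \<phi> v) = (\<Sum>c<6. v c * Kc d \<phi> c)"
proof -
  let ?C = "\<lambda>j. cofactor (Nm d \<phi> (\<lambda>_. 0)) 5 j"
  have L: "det (Nm d \<phi> u) = (\<Sum>j<6. u j * ?C j)" for u
  proof -
    have "det (Nm d \<phi> u) = (\<Sum>j<6. Nm d \<phi> u $$ (5,j) * cofactor (Nm d \<phi> u) 5 j)"
      by (rule laplace_expansion_row[OF Nm_carrier]) simp
    also have "\<dots> = (\<Sum>j<6. u j * ?C j)"
      by (intro sum.cong refl, subst cof_indep[of d \<phi> u _ "\<lambda>_. 0"], simp add: Nm_def)
    finally show ?thesis .
  qed
  have "Kc d \<phi> c = ?C c" if "c < 6" for c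
  proof -
    have "(\<Sum>j<6. ev c j * ?C j) = (\<Sum>j<6. if j = c then ?C j else 0)"
      by (intro sum.cong) (auto simp: ev_def)
    then show ?thesis unfolding Kc_def L using that by simp
  qed
  then show ?thesis unfolding L by (intro sum.cong refl) simp
qed

lemma rows_zero: "r < 5 \<Longrightarrow> (\<Sum>c<6. rowv \<phi> (mm d r) c * Kc d \<phi> c) = 0"
proof -
  assume r: "r < 5"
  have "det (Nm d \<phi> (rowv \<phi> (mm d r))) = 0"
    by (rule det_identical_rows[OF Nm_carrier, of r 5]) (use r in \<open>auto simp: Nm_def row_def\<close>)
  then show ?thesis unfolding det_lin .
qed

lemma det_zero_if_kernel:
  assumes A: "A \<in> carrier_mat n n" and k0: "k0 < n" "x k0 \<noteq> (0::complex)"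
    and K: "\<forall>i<n. (\<Sum>k<n. A $$ (i,k) * x k) = 0"
  shows "det A = 0"
proof -
  have "vec n x \<noteq> 0\<^sub>v n" using k0 by (metis index_vec index_zero_vec(1))
  moreover have "A *\<^sub>v vec n x = 0\<^sub>v n"
  proof (rule eq_vecI)
    fix i assume "i < dim_vec (0\<^sub>v n :: complex vec)"
    then have i: "i < n" by simp
    have "(A *\<^sub>v vec n x) $ i = (\<Sum>k\<in>{0..<n}. A $$ (i,k) * x k)"
      using A i by (simp add: scalar_prod_def row_def)
    also have "\<dots> = 0" using K i by (simp add: atLeast0LessThan)
    finally show "(A *\<^sub>v vec n x) $ i = 0\<^sub>v n $ i" using i by simp
  qed (use A in simp)
  moreover have "vec n x \<in> carrier_vec n" by simp
  ultimately show ?thesis using det_0_iff_vec_prod_zero_field[OF A] by blast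
qed

lemma kernel_if_det_zero:
  assumes A: "A \<in> carrier_mat n n" and "det A = (0::complex)"
  shows "\<exists>x. (\<exists>k<n. x k \<noteq> 0) \<and> (\<forall>i<n. (\<Sum>k<n. A $$ (i,k) * x k) = 0)"
proof -
  obtain v where v: "v \<in> carrier_vec n" "v \<noteq> 0\<^sub>v n" "A *\<^sub>v v = 0\<^sub>v n"
    using det_0_iff_vec_prod_zero_field[OF A] assms(2) by auto
  have "\<exists>k<n. v $ k \<noteq> 0"
  proof (rule ccontr)
    assume "\<not> ?thesis"
    then have "v = 0\<^sub>v n" using v(1) by (intro eq_vecI) auto
    then show False using v(2) by simp
  qed
  moreover have "(\<Sum>k<n. A $$ (i,k) * v $ k) = 0" if i: "i < n" for i
  proof -
    have "(A *\<^sub>v v) $ i = 0" using v(3) i by simp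
    then show ?thesis using A v(1) i by (simp add: scalar_prod_def row_def atLeast0LessThan)
  qed
  ultimately show ?thesis by blast
qed



lemma contact_vec_nz:
  assumes "contact A"
  shows "\<exists>k<6. A (pI k) (pJ k) \<noteq> 0"
proof (rule ccontr)
  assume "\<not> ?thesis"
  then have z: "\<forall>k<6. A (pI k) (pJ k) = 0" by blast
  have "A = amat (\<lambda>k. A (pI k) (pJ k))" using amat_vec assms unfolding contact_def by simp
  then have "pfaff A = pfaff (amat (\<lambda>k. A (pI k) (pJ k)))" by simp
  also have "\<dots> = 0" unfolding pfaff_amat using z by simp
  finally show False using assms unfolding contact_def by simp
qed

lemma tangent_rows:
  assumes "contact A" "tangent A \<phi>"
  shows "(\<Sum>k<6. rowv \<phi> m k * A (pI k) (pJ k)) = 0"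
  using assms tangent_iff[of A \<phi>] unfolding contact_def by (simp add: mult.commute)

lemma legendrian_rows:
  assumes "\<phi> \<in> zclosure d (tangent_to_contact d)"
  shows "(\<Sum>c<6. rowv \<phi> m c * Kc d \<phi> c) = 0"
proof -
  have P: "(\<lambda>\<psi>. det (Nm d \<psi> (rowv \<psi> m))) \<in> polyfun"
    by (rule Nm_polyfun) (rule polyfun_rowv)
  have "det (Nm d \<psi> (rowv \<psi> m)) = 0" if psi: "\<psi> \<in> tangent_to_contact d" for \<psi>
  proof -
    obtain A where A: "contact A" "tangent A \<psi>" using psi unfolding tangent_to_contact_def by blast
    obtain k0 where k0: "k0 < 6" "A (pI k0) (pJ k0) \<noteq> 0" using contact_vec_nz[OF A(1)] by blast
    show ?thesis
    proof (rule det_zero_if_kernel[where x="\<lambda>k. A (pI k) (pJ k)", OF Nm_carrier k0])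
      show "\<forall>i<6. (\<Sum>k<6. Nm d \<psi> (rowv \<psi> m) $$ (i, k) * A (pI k) (pJ k)) = 0"
      proof (intro allI impI)
        fix i :: nat assume i: "i < 6"
        have "(\<Sum>k<6. Nm d \<psi> (rowv \<psi> m) $$ (i, k) * A (pI k) (pJ k)) =
              (\<Sum>k<6. rowv \<psi> (if i < 5 then mm d i else m) k * A (pI k) (pJ k))"
          using i by (intro sum.cong refl) (simp add: Nm_def)
        also have "\<dots> = 0" by (rule tangent_rows[OF A])
        finally show "(\<Sum>k<6. Nm d \<psi> (rowv \<psi> m) $$ (i, k) * A (pI k) (pJ k)) = 0" .
      qed
    qed
  qed
  then have "det (Nm d \<phi> (rowv \<phi> m)) = 0"
  proof -
    have "\<forall>f\<in>polyfun. (\<forall>\<psi>\<in>tangent_to_contact d. f \<psi> = 0) \<longrightarrow> f \<phi> = 0"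
      using assms unfolding zclosure_def by simp
    from bspec[OF this P] show ?thesis using \<open>\<And>\<psi>. \<psi> \<in> tangent_to_contact d \<Longrightarrow> det (Nm d \<psi> (rowv \<psi> m)) = 0\<close> by simp
  qed
  then show ?thesis unfolding det_lin .
qed

lemma amat_scale:
  assumes "\<forall>k<6. y k = s * x k"
  shows "amat y = (\<lambda>i j. s * amat x i j)"
proof (intro ext)
  fix i j :: nat
  have a: "\<And>i j::nat. i < j \<Longrightarrow> j < 4 \<Longrightarrow> i + j - 1 + (if i = 0 then 0 else 1) < 6" by auto
  show "amat y i j = s * amat x i j"
  proof (cases "i < 4 \<and> j < 4")
    case True
    show ?thesis
    proof (cases "i < j")
      case ij: True
      have "y (i + j - 1 + (if i = 0 then 0 else 1)) = s * x (i + j - 1 + (if i = 0 then 0 else 1))"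
        using assms a[OF ij] True by blast
      then show ?thesis using True ij unfolding amat_def by simp
    next
      case False
      show ?thesis
      proof (cases "j < i")
        case ji: True
        have "y (j + i - 1 + (if j = 0 then 0 else 1)) = s * x (j + i - 1 + (if j = 0 then 0 else 1))"
          using assms a[OF ji] True by blast
        then show ?thesis using True ji unfolding amat_def by simp
      next
        case False
        then show ?thesis using \<open>\<not> i < j\<close> unfolding amat_def by simp
      qed
    qed
  next
    case False then show ?thesis unfolding amat_def if_not_P[OF False] by simp
  qed
qed

lemma uniqueness:
  assumes L: "\<phi> \<in> zclosure d (tangent_to_contact d)" and f: "fpf d \<phi> \<noteq> 0"
    and B: "contact B" "tangent B \<phi>"
  shows "\<exists>s. B = (\<lambda>i j. s * amat (Kc d \<phi>) i j)"
proof -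
  let ?K = "Kc d \<phi>"
  let ?b = "\<lambda>k. B (pI k) (pJ k)"
  obtain c where c: "c < 6" "?K c \<noteq> 0"
  proof (rule ccontr)
    assume "\<not> thesis"
    with that have "\<forall>c<6. ?K c = 0" by blast
    then have "fpf d \<phi> = 0" unfolding fpf_def by simp
    then show False using f by simp
  qed
  define w where "w k = ?K c * ?b k - ?b c * ?K k" for k
  have "w k = 0" if k: "k < 6" for k
  proof (rule ccontr)
    assume wk: "w k \<noteq> 0"
    have "det (Nm d \<phi> (ev c)) = 0"
    proof (rule det_zero_if_kernel[where x=w, OF Nm_carrier k wk], intro allI impI)
      fix i :: nat assume i: "i < 6"
      show "(\<Sum>k<6. Nm d \<phi> (ev c) $$ (i, k) * w k) = 0"
      proof (cases "i < 5")
        case True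
        have "(\<Sum>k<6. Nm d \<phi> (ev c) $$ (i, k) * w k) = (\<Sum>k<6. rowv \<phi> (mm d i) k * w k)"
          using i True by (intro sum.cong refl) (simp add: Nm_def)
        also have "\<dots> = ?K c * (\<Sum>k<6. rowv \<phi> (mm d i) k * ?b k) - ?b c * (\<Sum>k<6. rowv \<phi> (mm d i) k * ?K k)"
        proof -
          have e: "\<And>k. rowv \<phi> (mm d i) k * w k = ?K c * (rowv \<phi> (mm d i) k * ?b k) - ?b c * (rowv \<phi> (mm d i) k * ?K k)"
            unfolding w_def by (simp add: algebra_simps)
          show ?thesis by (simp only: e sum_subtractf sum_distrib_left)
        qed
        also have "\<dots> = 0" using tangent_rows[OF B, of "mm d i"] rows_zero[OF True, of \<phi> d] by simp
        finally show ?thesis .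
      next
        case False
        then have i5: "i = 5" using i by simp
        have "(\<Sum>k<6. Nm d \<phi> (ev c) $$ (i, k) * w k) = (\<Sum>k<6. if k = c then w k else 0)"
          using i5 by (intro sum.cong refl) (simp add: Nm_def ev_def)
        also have "\<dots> = w c" using c by simp
        also have "\<dots> = 0" unfolding w_def by simp
        finally show ?thesis .
      qed
    qed
    then show False using c unfolding Kc_def by simp
  qed
  then have "\<forall>k<6. ?b k = (?b c / ?K c) * ?K k"
  proof (intro allI impI)
    fix k :: nat assume "k < 6"
    then have "w k = 0" using \<open>\<And>k. k < 6 \<Longrightarrow> w k = 0\<close> by blast
    then have "?K c * ?b k = ?b c * ?K k" unfolding w_def by simp
    then show "?b k = (?b c / ?K c) * ?K k" using c(2) by (simp add: field_simps)
  qed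
  then have "amat ?b = (\<lambda>i j. (?b c / ?K c) * amat ?K i j)" by (rule amat_scale)
  moreover have "amat ?b = B" using amat_vec B(1) unfolding contact_def by simp
  ultimately show ?thesis by metis
qed

lemma existence:
  assumes L: "\<phi> \<in> zclosure d (tangent_to_contact d)" and f: "fpf d \<phi> \<noteq> 0"
  shows "contact (amat (Kc d \<phi>)) \<and> tangent (amat (Kc d \<phi>)) \<phi>"
proof
  show "contact (amat (Kc d \<phi>))" unfolding contact_def pfaff_amat using f amat_antisym
    unfolding fpf_def by simp
  have "(\<Sum>k<6. amat (Kc d \<phi>) (pI k) (pJ k) * rowv \<phi> m k) = 0" for m
  proof -
    have "(\<Sum>k<6. amat (Kc d \<phi>) (pI k) (pJ k) * rowv \<phi> m k) = (\<Sum>k<6. rowv \<phi> m k * Kc d \<phi> k)"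
      by (intro sum.cong refl) (simp add: amat_pair)
    then show ?thesis using legendrian_rows[OF L] by simp
  qed
  then show "tangent (amat (Kc d \<phi>)) \<phi>" using tangent_iff[OF amat_antisym] by blast
qed


definition phi0 :: "nat \<Rightarrow> nat \<Rightarrow> mpoly" where
  "phi0 d i = (if i = 0 then Poly_Mapping.single (xmon d 0 0 0) 1 + Poly_Mapping.single (xmon 0 (d-1) 0 1) 1
    else if i = 1 then Poly_Mapping.single (xmon (d-1) 1 0 0) 1
    else if i = 2 then Poly_Mapping.single (xmon 0 d 0 0) (-1) else 0)"
lemmas var_x = var_xmon var_xmon[unfolded One_nat_def]

lemma rowP_all:
  "rowP (phi0 (Suc (Suc n))) 0 = Poly_Mapping.single (xmon 0 (Suc (Suc n)) 0 1) 1"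
  "rowP (phi0 (Suc (Suc n))) 1 = Poly_Mapping.single (xmon (Suc (Suc n)) 0 1 0) 1 + Poly_Mapping.single (xmon 0 (Suc n) 1 1) 1 + Poly_Mapping.single (xmon 1 (Suc (Suc n)) 0 0) 1"
  "rowP (phi0 (Suc (Suc n))) 2 = Poly_Mapping.single (xmon (Suc (Suc n)) 0 0 1) 1 + Poly_Mapping.single (xmon 0 (Suc n) 0 (Suc (Suc 0))) 1"
  "rowP (phi0 (Suc (Suc n))) 3 = Poly_Mapping.single (xmon (Suc n) 1 1 0) 1 + Poly_Mapping.single (xmon 0 (Suc (Suc (Suc n))) 0 0) 1"
  "rowP (phi0 (Suc (Suc n))) 4 = Poly_Mapping.single (xmon (Suc n) 1 0 1) 1"
  "rowP (phi0 (Suc (Suc n))) 5 = Poly_Mapping.single (xmon 0 (Suc (Suc n)) 0 1) (-1)"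
  unfolding rowP_def pI_def pJ_def phi0_def by (simp_all add: var_x mult_single single_uminus algebra_simps)

lemma R: assumes "r < 5" "k < 6"
  shows "rowv (phi0 (Suc (Suc n))) (mm (Suc (Suc n)) r) k = (if (r = 0 \<and> k = 1) \<or> (r = 1 \<and> k = 2) \<or> (r = 2 \<and> k = 3) \<or> (r = 3 \<and> k = 4) \<or> (r = 4 \<and> k = 0) then 1
      else if r = 4 \<and> k = 5 then -1 else 0)"
proof -
  have "r \<in> {0,1,2,3,4}" "k \<in> {0,1,2,3,4,5}" using assms by auto
  then show ?thesis unfolding rowv_def
    by (elim insertE emptyE; simp only: rowP_all; simp add: mm_def lookup_add lookup_single when_def)
qed


definition e05 :: "nat \<Rightarrow> complex" where "e05 k = (if k = 0 \<or> k = 5 then 1 else 0)"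

lemma phi0_VF: "d \<ge> 1 \<Longrightarrow> phi0 d \<in> VF d"
  unfolding VF_def phi0_def
  by (auto intro!: hom_add hom_single_xmon hom_0)

lemma phi0_tangent: "tangent (amat e05) (phi0 (Suc (Suc n)))"
proof -
  have "(\<Sum>i<4. form_coeff (amat e05) i * phi0 (Suc (Suc n)) i) =
        (\<Sum>k<6. const (amat e05 (pI k) (pJ k)) * rowP (phi0 (Suc (Suc n))) k)"
    by (rule form_identity[OF amat_antisym])
  also have "\<dots> = (\<Sum>k<6. const (e05 k) * rowP (phi0 (Suc (Suc n))) k)"
    by (intro sum.cong refl) (simp add: amat_pair)
  also have "\<dots> = rowP (phi0 (Suc (Suc n))) 0 + rowP (phi0 (Suc (Suc n))) 5"
    unfolding sum6 e05_def by simp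
  also have "\<dots> = 0" unfolding rowP_all by (simp add: single_uminus)
  finally show ?thesis unfolding tangent_def .
qed

lemma phi0_contact: "contact (amat e05)"
  unfolding contact_def pfaff_amat e05_def using amat_antisym by simp

lemma phi0_not_Rad: "phi0 (Suc (Suc n)) \<notin> Rad (Suc (Suc n))"
proof
  assume "phi0 (Suc (Suc n)) \<in> Rad (Suc (Suc n))"
  then obtain g where g: "\<forall>i<4. phi0 (Suc (Suc n)) i = g * var i" unfolding Rad_def by blast
  have "g * var 3 = 0" using g[rule_format, of 3] by (simp add: phi0_def)
  moreover have "var 3 \<noteq> 0"
    unfolding var_def by (metis lookup_single_eq one_neq_zero lookup_zero)
  ultimately have "g = 0" by simp
  then have "phi0 (Suc (Suc n)) 0 = 0" using g[rule_format, of 0] by simp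
  moreover have "Poly_Mapping.lookup (phi0 (Suc (Suc n)) 0) (xmon (Suc (Suc n)) 0 0 0) = 1"
    unfolding phi0_def by (simp add: lookup_add lookup_single when_def)
  ultimately show False by simp
qed

lemma phi0_fpf: "fpf (Suc (Suc n)) (phi0 (Suc (Suc n))) \<noteq> 0"
proof -
  let ?d = "Suc (Suc n)"
  let ?K = "Kc ?d (phi0 ?d)"
  note R = R[of _ _ n]
  have z: "(\<Sum>c<6. rowv (phi0 ?d) (mm ?d r) c * ?K c) = 0" if "r < 5" for r
    using rows_zero that by blast
  have K1: "?K 1 = 0" using z[of 0] R by (simp add: sum6)
  have K2: "?K 2 = 0" using z[of 1] R by (simp add: sum6)
  have K3: "?K 3 = 0" using z[of 2] R by (simp add: sum6)
  have K4: "?K 4 = 0" using z[of 3] R by (simp add: sum6)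
  have K5: "?K 5 = ?K 0" using z[of 4] R by (simp add: sum6)
  have K0: "?K 0 \<noteq> 0"
  proof
    assume "?K 0 = 0"
    then obtain x where x: "\<exists>k<6. x k \<noteq> 0" "\<forall>i<6. (\<Sum>k<6. Nm ?d (phi0 ?d) (ev 0) $$ (i,k) * x k) = 0"
      using kernel_if_det_zero[OF Nm_carrier] unfolding Kc_def by blast
    have Nm: "Nm ?d (phi0 ?d) (ev 0) $$ (i,k) = (if i < 5 then rowv (phi0 ?d) (mm ?d i) k else ev 0 k)"
      if "i < 6" "k < 6" for i k using that by (simp add: Nm_def)
    have "x k = 0" if "k < 6" for k
    proof -
      have e: "\<And>i. i < 6 \<Longrightarrow> (\<Sum>k<6. (if i < 5 then rowv (phi0 ?d) (mm ?d i) k else ev 0 k) * x k) = 0"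
        using x(2) Nm by (simp add: sum6)
      have "x 1 = 0" using e[of 0] R by (simp add: sum6)
      moreover have "x 2 = 0" using e[of 1] R by (simp add: sum6)
      moreover have "x 3 = 0" using e[of 2] R by (simp add: sum6)
      moreover have "x 4 = 0" using e[of 3] R by (simp add: sum6)
      moreover have "x 0 = x 5" using e[of 4] R by (simp add: sum6)
      moreover have "x 0 = 0" using e[of 5] by (simp add: sum6 ev_def)
      ultimately show ?thesis using that by (auto simp: less_Suc_eq numeral_eq_Suc)
    qed
    then show False using x(1) by blast
  qed
  show ?thesis unfolding fpf_def K1 K2 K3 K4 K5 using K0 by simp
qed


theorem proposition7p4:
  fixes d :: nat
  assumes "d > 1"
  shows "\<exists>f \<in> polyfun.
           (\<exists>\<phi> \<in> Legendrian d. f \<phi> \<noteq> 0) \<and>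
           (\<forall>\<phi> \<in> Legendrian d. f \<phi> \<noteq> 0 \<longrightarrow>
              (\<exists>A. contact A \<and> tangent A \<phi> \<and>
                   (\<forall>B. contact B \<and> tangent B \<phi> \<longrightarrow> (\<exists>c. B = (\<lambda>i j. c * A i j)))))"
proof -
  define n where "n = d - 2"
  have d: "d = Suc (Suc n)" using assms unfolding n_def by simp
  have VF: "phi0 d \<in> VF d" using phi0_VF[of d] d by simp
  have NR: "phi0 d \<notin> Rad d" using phi0_not_Rad[of n] d by simp
  have TG: "contact (amat e05) \<and> tangent (amat e05) (phi0 d)" using phi0_contact phi0_tangent[of n] d by simp
  have T: "phi0 d \<in> tangent_to_contact d"
    unfolding tangent_to_contact_def using VF NR TG by blast
  have "\<forall>f\<in>polyfun. (\<forall>\<psi>\<in>tangent_to_contact d. f \<psi> = 0) \<longrightarrow> f (phi0 d) = 0"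
    using T by blast
  then have L: "phi0 d \<in> Legendrian d"
    unfolding Legendrian_def zclosure_def using VF NR by blast
  have W: "\<exists>\<phi> \<in> Legendrian d. fpf d \<phi> \<noteq> 0"
    using L phi0_fpf[of n] unfolding d by blast
  have U: "\<forall>\<phi> \<in> Legendrian d. fpf d \<phi> \<noteq> 0 \<longrightarrow>
              (\<exists>A. contact A \<and> tangent A \<phi> \<and>
                   (\<forall>B. contact B \<and> tangent B \<phi> \<longrightarrow> (\<exists>c. B = (\<lambda>i j. c * A i j))))"
  proof (intro ballI impI)
    fix \<phi> assume \<phi>: "\<phi> \<in> Legendrian d" and f: "fpf d \<phi> \<noteq> 0"
    have Z: "\<phi> \<in> zclosure d (tangent_to_contact d)" using \<phi> unfolding Legendrian_def by blast
    show "\<exists>A. contact A \<and> tangent A \<phi> \<and>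
                   (\<forall>B. contact B \<and> tangent B \<phi> \<longrightarrow> (\<exists>c. B = (\<lambda>i j. c * A i j)))"
      using existence[OF Z f] uniqueness[OF Z f] by blast
  qed
  show ?thesis using fpf_polyfun W U by blast
qed

end
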